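(* Let $\lambda$ be a partition and $c=(x,y)\in\overline{\lambda}$ with $x>\lambda_1$ and $y>\lambda'_1$. Then for every $\nu\in\mathcal{U}(\lambda)$, \[ P^{q,t}_\lambda(\nu\mid c)=t^{n(\nu/\lambda)}\alpha_{\nu/\lambda}(q,t). \] In particular $P^{q,t}_\lambda(\nu\mid c)$ does not depend on the choice of such $c$.
   Context: Partitions are Young diagrams in French convention: cells $(x,y)\in\mathbb{Z}_{>0}^2$ with $x\le\lambda_y$; $\lambda'$ is the conjugate ($\lambda_j=0$ for $j>\lambda'_1$, $\lambda'_i=0$ for $i>\lambda_1$). For $c=(x,y)\in\lambda$: $a_\lambda(c)=\lambda_y-x$, $\ell_\lambda(c)=\lambda'_x-y$; $n(\kappa)=\sum_{c\in\kappa}\ell_\kappa(c)$, $n(\nu/\lambda)=n(\nu)-n(\lambda)$. $\mathcal{U}(\lambda)$ is the set of partitions obtained by adding one cell to $\lambda$. For $\lambda\subseteq\nu$, $\mathcal{R}_{\nu/\lambda}$ (resp. $\mathcal{C}_{\nu/\lambda}$) is the set of cells of $\lambda$ in a row (resp. column) containing a cell of $\nu/\lambda$. With $[i,j]=1-q^it^j$: $\alpha_{\nu/\lambda}(q,t)=\prod_{c\in\mathcal{R}_{\nu/\lambda}}\frac{[a_\lambda(c),\ell_\lambda(c)+1]}{[a_\nu(c),\ell_\nu(c)+1]}\prod_{c\in\mathcal{C}_{\nu/\lambda}}\frac{[a_\lambda(c)+1,\ell_\lambda(c)]}{[a_\nu(c)+1,\ell_\nu(c)]}$. Exterior hook walk: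 $\overline{\lambda}=\mathbb{Z}_{>0}^2\setminus\lambda$. For $c=(x,y)\in\overline{\lambda}$: ${\rm arm}_\lambda(c)=\{(i,y):\lambda_y<i<x\}$, ${\rm leg}_\lambda(c)=\{(x,j):\lambda'_x<j<y\}$, $a(c)=|{\rm arm}_\lambda(c)|$, $\ell(c)=|{\rm leg}_\lambda(c)|$; $c$ is an outer corner of $\lambda$ iff $a(c)=\ell(c)=0$. For $c'\in{\rm arm}_\lambda(c)\cup{\rm leg}_\lambda(c)$ set $P(c\rightarrow c')=q^{a(c)-i}\frac{t^{\ell(c)}(1-q)}{1-q^{a(c)}t^{\ell(c)}}$ if $c'=(x-i,y)\in{\rm arm}_\lambda(c)$, and $P(c\rightarrow c')=t^{j-1}\frac{1-t}{1-q^{a(c)}t^{\ell(c)}}$ if $c'=(x,y-j)\in{\rm leg}_\lambda(c)$. The exterior $(q,t)$-hook walk from $c$ terminates if $c$ is an outer corner, and otherwise moves to $c'$ with probability $P(c\rightarrow c')$ and repeats. $P^{q,t}_\lambda(\nu\mid c)$ is the probability (a rational function of $q,t$: sum over walks of products of step probabilities) that the walk from $c$ terminates at the cell $\nu/\lambda$. *)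

theory Defs
  imports Complex_Main
begin

text \<open>Partitions are represented as weakly decreasing lists of positive naturals
  (lambda_1 >= lambda_2 >= ... > 0).  Cells are pairs (x,y) with x,y >= 1 in French convention.\<close>

definition is_partition :: "nat list \<Rightarrow> bool" where
  "is_partition lam \<longleftrightarrow> sorted_wrt (\<ge>) lam \<and> 0 \<notin> set lam"

definition part :: "nat list \<Rightarrow> nat \<Rightarrow> nat" where
  "part lam y = (if 1 \<le> y \<and> y \<le> length lam then lam ! (y - 1) else 0)"

definition conj :: "nat list \<Rightarrow> nat \<Rightarrow> nat" where
  "conj lam x = length (filter (\<lambda>r. x \<le> r) lam)"

definition cells :: "nat list \<Rightarrow> (nat \<times> nat) set" where
  "cells lam = {(x, y). 1 \<le> x \<and> 1 \<le> y \<and> x \<le> part lam y}"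

definition arm :: "nat list \<Rightarrow> nat \<times> nat \<Rightarrow> nat" where
  "arm lam c = part lam (snd c) - fst c"

definition leg :: "nat list \<Rightarrow> nat \<times> nat \<Rightarrow> nat" where
  "leg lam c = conj lam (fst c) - snd c"

definition n_part :: "nat list \<Rightarrow> nat" where
  "n_part lam = (\<Sum>c\<in>cells lam. leg lam c)"

definition add_one :: "nat list \<Rightarrow> nat list set" where
  "add_one lam = {nu. is_partition nu \<and> cells lam \<subseteq> cells nu \<and> card (cells nu - cells lam) = 1}"

definition rowset :: "nat list \<Rightarrow> nat list \<Rightarrow> (nat \<times> nat) set" where
  "rowset nu lam = {c \<in> cells lam. \<exists>d \<in> cells nu - cells lam. snd d = snd c}"

definition colset :: "nat list \<Rightarrow> nat list \<Rightarrow> (nat \<times> nat) set" where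
  "colset nu lam = {c \<in> cells lam. \<exists>d \<in> cells nu - cells lam. fst d = fst c}"

definition br :: "real \<Rightarrow> real \<Rightarrow> nat \<Rightarrow> nat \<Rightarrow> real" where
  "br q t i j = 1 - q ^ i * t ^ j"

definition alpha :: "nat list \<Rightarrow> nat list \<Rightarrow> real \<Rightarrow> real \<Rightarrow> real" where
  "alpha nu lam q t =
     (\<Prod>c\<in>rowset nu lam. br q t (arm lam c) (leg lam c + 1) / br q t (arm nu c) (leg nu c + 1)) *
     (\<Prod>c\<in>colset nu lam. br q t (arm lam c + 1) (leg lam c) / br q t (arm nu c + 1) (leg nu c))"

definition ext_arm :: "nat list \<Rightarrow> nat \<times> nat \<Rightarrow> nat" where
  "ext_arm lam c = fst c - part lam (snd c) - 1"

definition ext_leg :: "nat list \<Rightarrow> nat \<times> nat \<Rightarrow> nat" where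
  "ext_leg lam c = snd c - conj lam (fst c) - 1"

text \<open>Probability that the exterior (q,t)-hook walk started at c terminates at cell d:
  sum over walks of products of step probabilities.\<close>
function hw :: "nat list \<Rightarrow> real \<Rightarrow> real \<Rightarrow> nat \<times> nat \<Rightarrow> nat \<times> nat \<Rightarrow> real" where
  "hw lam q t c d =
     (let a = ext_arm lam c; l = ext_leg lam c in
      if a = 0 \<and> l = 0 then (if c = d then 1 else 0)
      else (\<Sum>i\<in>{1..a}. q ^ (a - i) * t ^ l * (1 - q) / (1 - q ^ a * t ^ l) * hw lam q t (fst c - i, snd c) d)
         + (\<Sum>j\<in>{1..l}. t ^ (j - 1) * (1 - t) / (1 - q ^ a * t ^ l) * hw lam q t (fst c, snd c - j) d))"
  by pat_completeness auto
termination
  by (relation "measure (\<lambda>(lam, q, t, c, d). fst c + snd c)")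
     (auto simp: ext_arm_def ext_leg_def)

definition hook_prob :: "nat list \<Rightarrow> real \<Rightarrow> real \<Rightarrow> nat list \<Rightarrow> nat \<times> nat \<Rightarrow> real" where
  "hook_prob lam q t nu c = hw lam q t c (the_elem (cells nu - cells lam))"

end

theory Submission
  imports Defs
begin



lemma conj_Cons: "conj (r # rs) x = (if x \<le> r then Suc (conj rs x) else conj rs x)"
  by (simp add: conj_def)

lemma part_Cons: "part (r # rs) y = (if y = 1 then r else part rs (y - 1))"
  by (auto simp: part_def nth_Cons' )

lemma part_le_head: "sorted_wrt (\<ge>) (r # rs) \<Longrightarrow> part rs y \<le> r"
  by (auto simp: part_def)

lemma conj_zero_if: "\<forall>s\<in>set rs. s < x \<Longrightarrow> conj rs x = 0"
  by (auto simp: conj_def filter_empty_conv)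

lemma F1_gen:
  assumes "sorted_wrt (\<ge>) lam" "1 \<le> x" "1 \<le> y"
  shows "y \<le> conj lam x \<longleftrightarrow> x \<le> part lam y"
  using assms
proof (induction lam arbitrary: y)
  case Nil
  then show ?case by (simp add: conj_def part_def)
next
  case (Cons r rs)
  have srt: "sorted_wrt (\<ge>) rs" using Cons.prems by simp
  show ?case
  proof (cases "y = 1")
    case True
    have "\<not> x \<le> r \<Longrightarrow> conj rs x = 0" using Cons.prems(1)
      by (intro conj_zero_if) auto
    with True show ?thesis by (simp add: conj_Cons part_Cons)
  next
    case False
    then have y2: "1 \<le> y - 1" using Cons.prems by simp
    show ?thesis
    proof (cases "x \<le> r")
      case True
      then show ?thesis using Cons.IH[OF srt Cons.prems(2) y2] False
        by (simp add: conj_Cons part_Cons) linarith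
    next
      case nx: False
      have "conj rs x = 0" using Cons.prems(1) nx
        by (intro conj_zero_if) auto
      moreover have "part rs (y-1) \<le> r" using part_le_head[OF Cons.prems(1)] .
      ultimately show ?thesis using nx False Cons.prems(3) by (simp add: conj_Cons part_Cons)
    qed
  qed
qed

lemma part_antimono:
  assumes "sorted_wrt (\<ge>) lam" "1 \<le> y" "y \<le> y'"
  shows "part lam y' \<le> part lam y"
proof (cases "y' \<le> length lam")
  case True
  then show ?thesis using assms
    by (cases "y = y'") (auto simp: part_def sorted_wrt_iff_nth_less)
next
  case False
  then show ?thesis by (simp add: part_def)
qed

lemma nat_eq_by_le: "(\<And>y. 1 \<le> y \<Longrightarrow> y \<le> (a::nat) \<longleftrightarrow> y \<le> b) \<Longrightarrow> a = b"
proof -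
  assume h: "\<And>y. 1 \<le> y \<Longrightarrow> y \<le> (a::nat) \<longleftrightarrow> y \<le> b"
  show "a = b"
  proof (rule ccontr)
    assume "a \<noteq> b"
    then consider "a < b" | "b < a" by linarith
    then show False
    proof cases
      case 1 then show False using h[of b] by linarith
    next
      case 2 then show False using h[of a] by linarith
    qed
  qed
qed




declare hw.simps[simp del]

lemma conj_antimono:
  assumes "sorted_wrt (\<ge>) lam" "1 \<le> x" "x \<le> x'"
  shows "conj lam x' \<le> conj lam x"
proof (cases "conj lam x' = 0")
  case False
  then have "1 \<le> conj lam x'" by simp
  then have "x' \<le> part lam (conj lam x')" using F1_gen[OF assms(1), of x' "conj lam x'"] assms by simp
  then have "x \<le> part lam (conj lam x')" using assms by simp
  then show ?thesis using F1_gen[OF assms(1), of x "conj lam x'"] assms \<open>1 \<le> conj lam x'\<close> by simp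
qed simp

lemma qt_lt1:
  fixes q t :: real
  assumes "0 < q" "q < 1" "0 < t" "t < 1" "0 < i \<or> 0 < j"
  shows "q ^ i * t ^ j < 1"
proof -
  have a: "q ^ i \<le> 1" "t ^ j \<le> 1" "0 \<le> q ^ i" "0 \<le> t ^ j"
    using assms by (auto intro: power_le_one)
  show ?thesis
  proof (cases "0 < i")
    case True
    then have "q ^ i < 1" using assms by (simp add: power_less_one_iff)
    moreover have "q ^ i * t ^ j \<le> q ^ i" using a by (simp add: mult_left_le)
    ultimately show ?thesis by linarith
  next
    case False
    then have "t ^ j < 1" using assms by (simp add: power_less_one_iff)
    then show ?thesis using a False by simp
  qed
qed

lemma hw_zero:
  "fst c < fst d \<or> snd c < snd d \<Longrightarrow> hw lam q t c d = 0"
proof (induction "fst c + snd c" arbitrary: c rule: less_induct)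
  case less
  let ?a = "ext_arm lam c" and ?l = "ext_leg lam c"
  show ?case
  proof (cases "?a = 0 \<and> ?l = 0")
    case True
    then show ?thesis using less.prems by (subst hw.simps) (auto simp: Let_def)
  next
    case False
    have s1: "hw lam q t (fst c - i, snd c) d = 0" if "i \<in> {1..?a}" for i
    proof -
      have "?a \<le> fst c - 1" by (simp add: ext_arm_def)
      then have "fst c - i + snd c < fst c + snd c" using that by auto
      then show ?thesis using less.hyps less.prems that by auto
    qed
    have s2: "hw lam q t (fst c, snd c - j) d = 0" if "j \<in> {1..?l}" for j
    proof -
      have "?l \<le> snd c - 1" by (simp add: ext_leg_def)
      then have "fst c + (snd c - j) < fst c + snd c" using that by auto
      then show ?thesis using less.hyps less.prems that by auto
    qed
    show ?thesis
      apply (subst hw.simps[of lam q t c d])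
      unfolding Let_def if_not_P[OF False]
      using s1 s2 by simp
  qed
qed

lemma hw_unfold:
  assumes "\<not> (ext_arm lam c = 0 \<and> ext_leg lam c = 0)"
  shows "hw lam q t c d =
    (\<Sum>i\<in>{1..ext_arm lam c}. q ^ (ext_arm lam c - i) * t ^ ext_leg lam c * (1 - q) / (1 - q ^ ext_arm lam c * t ^ ext_leg lam c) * hw lam q t (fst c - i, snd c) d)
  + (\<Sum>j\<in>{1..ext_leg lam c}. t ^ (j - 1) * (1 - t) / (1 - q ^ ext_arm lam c * t ^ ext_leg lam c) * hw lam q t (fst c, snd c - j) d)"
  apply (subst hw.simps[of lam q t c d])
  unfolding Let_def if_not_P[OF assms] by (rule refl)

lemma sum_reindex_minus:
  "(a::nat) \<le> x \<Longrightarrow> (\<Sum>i\<in>{1..a}. h (x - i)) = (\<Sum>k\<in>{x-a..<x}. (h k :: real))"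
proof (induction a)
  case 0
  then show ?case by simp
next
  case (Suc a)
  have "{x - Suc a..<x} = insert (x - Suc a) {x - a..<x}" using Suc.prems by auto
  then have "(\<Sum>k\<in>{x - Suc a..<x}. h k) = h (x - Suc a) + (\<Sum>k\<in>{x-a..<x}. h k)"
    using Suc.prems by simp
  moreover have "(\<Sum>i\<in>{1..Suc a}. h (x - i)) = (\<Sum>i\<in>{1..a}. h (x - i)) + h (x - Suc a)"
    by (simp add: sum.cl_ivl_Suc)
  ultimately show ?case using Suc by simp
qed




lemma hw_unfold2:
  fixes x y :: nat and q t :: real
  assumes xp: "part lam y < x" and yc: "conj lam x < y"
    and nc: "0 < x - part lam y - 1 \<or> 0 < y - conj lam x - 1"
    and q: "0 < q" "q < 1" and t: "0 < t" "t < 1"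
  shows "hw lam q t (x,y) d * (1 - q ^ (x - part lam y - 1) * t ^ (y - conj lam x - 1)) =
    t ^ (y - conj lam x - 1) * (1 - q) * (\<Sum>x'\<in>{Suc (part lam y)..<x}. q ^ (x' - Suc (part lam y)) * hw lam q t (x', y) d)
  + (1 - t) * (\<Sum>y'\<in>{Suc (conj lam x)..<y}. t ^ (y - Suc y') * hw lam q t (x, y') d)"
proof -
  define A where "A = x - part lam y - 1"
  define L where "L = y - conj lam x - 1"
  define D where "D = 1 - q ^ A * t ^ L"
  have eA: "ext_arm lam (x,y) = A" by (simp add: ext_arm_def A_def)
  have eL: "ext_leg lam (x,y) = L" by (simp add: ext_leg_def L_def)
  have Dpos: "0 < D" unfolding D_def using qt_lt1[OF q t, of A L] nc A_def L_def by simp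
  have nc': "\<not> (ext_arm lam (x,y) = 0 \<and> ext_leg lam (x,y) = 0)" using nc unfolding eA eL A_def L_def by auto
  have h: "hw lam q t (x,y) d =
    (\<Sum>i\<in>{1..A}. q ^ (A - i) * t ^ L * (1 - q) / D * hw lam q t (x - i, y) d)
  + (\<Sum>j\<in>{1..L}. t ^ (j - 1) * (1 - t) / D * hw lam q t (x, y - j) d)"
    using hw_unfold[OF nc', of q t d] unfolding eA eL D_def by simp
  have s1: "(\<Sum>i\<in>{1..A}. q ^ (A - i) * t ^ L * (1 - q) / D * hw lam q t (x - i, y) d)
      = t ^ L * (1 - q) / D * (\<Sum>x'\<in>{Suc (part lam y)..<x}. q ^ (x' - Suc (part lam y)) * hw lam q t (x', y) d)"
  proof -
    have "(\<Sum>i\<in>{1..A}. q ^ (A - i) * t ^ L * (1 - q) / D * hw lam q t (x - i, y) d)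
        = t ^ L * (1 - q) / D * (\<Sum>i\<in>{1..A}. q ^ ((x - i) - Suc (part lam y)) * hw lam q t (x - i, y) d)"
      unfolding sum_distrib_left
    proof (rule sum.cong)
      fix i assume "i \<in> {1..A}"
      then have "A - i = (x - i) - Suc (part lam y)" unfolding A_def by auto
      then show "q ^ (A - i) * t ^ L * (1 - q) / D * hw lam q t (x - i, y) d =
          t ^ L * (1 - q) / D * (q ^ (x - i - Suc (part lam y)) * hw lam q t (x - i, y) d)" by simp
    qed simp
    also have "(\<Sum>i\<in>{1..A}. q ^ ((x - i) - Suc (part lam y)) * hw lam q t (x - i, y) d)
        = (\<Sum>x'\<in>{x - A..<x}. q ^ (x' - Suc (part lam y)) * hw lam q t (x', y) d)"
      by (rule sum_reindex_minus) (simp add: A_def)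
    also have "x - A = Suc (part lam y)" using xp A_def by simp
    finally show ?thesis .
  qed
  have s2: "(\<Sum>j\<in>{1..L}. t ^ (j - 1) * (1 - t) / D * hw lam q t (x, y - j) d)
      = (1 - t) / D * (\<Sum>y'\<in>{Suc (conj lam x)..<y}. t ^ (y - Suc y') * hw lam q t (x, y') d)"
  proof -
    have "(\<Sum>j\<in>{1..L}. t ^ (j - 1) * (1 - t) / D * hw lam q t (x, y - j) d)
        = (1 - t) / D * (\<Sum>j\<in>{1..L}. t ^ (y - Suc (y - j)) * hw lam q t (x, y - j) d)"
      unfolding sum_distrib_left
    proof (rule sum.cong)
      fix j assume "j \<in> {1..L}"
      then have "j - 1 = y - Suc (y - j)" unfolding L_def by auto
      then show "t ^ (j - 1) * (1 - t) / D * hw lam q t (x, y - j) d =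
          (1 - t) / D * (t ^ (y - Suc (y - j)) * hw lam q t (x, y - j) d)" by simp
    qed simp
    also have "(\<Sum>j\<in>{1..L}. t ^ (y - Suc (y - j)) * hw lam q t (x, y - j) d)
        = (\<Sum>y'\<in>{y - L..<y}. t ^ (y - Suc y') * hw lam q t (x, y') d)"
      by (rule sum_reindex_minus) (simp add: L_def)
    also have "y - L = Suc (conj lam x)" using yc L_def by simp
    finally show ?thesis .
  qed
  have "hw lam q t (x,y) d * D = (t ^ L * (1 - q) / D * (\<Sum>x'\<in>{Suc (part lam y)..<x}. q ^ (x' - Suc (part lam y)) * hw lam q t (x', y) d)
     + (1 - t) / D * (\<Sum>y'\<in>{Suc (conj lam x)..<y}. t ^ (y - Suc y') * hw lam q t (x, y') d)) * D"
    using h s1 s2 by simp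
  also have "\<dots> = t ^ L * (1 - q) * (\<Sum>x'\<in>{Suc (part lam y)..<x}. q ^ (x' - Suc (part lam y)) * hw lam q t (x', y) d)
     + (1 - t) * (\<Sum>y'\<in>{Suc (conj lam x)..<y}. t ^ (y - Suc y') * hw lam q t (x, y') d)"
    using Dpos by (simp add: field_simps)
  finally show ?thesis unfolding D_def A_def L_def .
qed




locale hws =
  fixes lam :: "nat list" and u v :: nat and q t :: real
  assumes srt: "sorted_wrt (\<ge>) lam" and u1: "1 \<le> u" and v1: "1 \<le> v"
    and Pv: "part lam v = u - 1" and Cu: "conj lam u = v - 1"
    and q0: "0 < q" and q1: "q < 1" and t0: "0 < t" and t1: "t < 1"
begin

abbreviation f where "f x y \<equiv> hw lam q t (x,y) (u,v)"

definition S where "S x = (\<Sum>x'\<in>{u..<x}. q ^ (x' - u) * f x' v)"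
definition T where "T y = (\<Sum>y'\<in>{v..<y}. t ^ (y - Suc y') * f u y')"

lemma P_le: "v \<le> y \<Longrightarrow> part lam y \<le> u - 1"
  using part_antimono[OF srt v1, of y] Pv by simp

lemma C_le: "u \<le> x \<Longrightarrow> conj lam x \<le> v - 1"
  using conj_antimono[OF srt u1, of x] Cu by simp

lemma f_uv: "f u v = 1"
proof -
  have "ext_arm lam (u,v) = 0" "ext_leg lam (u,v) = 0"
    using Pv Cu u1 v1 by (auto simp: ext_arm_def ext_leg_def)
  then show ?thesis by (subst hw.simps) (simp add: Let_def)
qed

lemma lt1: "0 < i \<or> 0 < j \<Longrightarrow> q ^ i * t ^ j < 1"
  using qt_lt1[OF q0 q1 t0 t1] by blast

lemma R_rel:
  assumes "u < x"
  shows "f x v * (1 - q ^ (x - u) * t ^ (v - 1 - conj lam x)) = t ^ (v - 1 - conj lam x) * (1 - q) * S x"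
proof -
  have c: "conj lam x \<le> v - 1" using C_le assms by simp
  have "f x v * (1 - q ^ (x - part lam v - 1) * t ^ (v - conj lam x - 1)) =
    t ^ (v - conj lam x - 1) * (1 - q) * (\<Sum>x'\<in>{Suc (part lam v)..<x}. q ^ (x' - Suc (part lam v)) * f x' v)
  + (1 - t) * (\<Sum>y'\<in>{Suc (conj lam x)..<v}. t ^ (v - Suc y') * f x y')"
    by (rule hw_unfold2) (use assms Pv c u1 v1 q0 q1 t0 t1 in auto)
  moreover have "(\<Sum>y'\<in>{Suc (conj lam x)..<v}. t ^ (v - Suc y') * f x y') = 0"
    by (rule sum.neutral) (auto simp: hw_zero)
  moreover have "Suc (part lam v) = u" "x - part lam v - 1 = x - u" "v - conj lam x - 1 = v - 1 - conj lam x"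
    using Pv u1 by auto
  ultimately show ?thesis unfolding S_def by simp
qed

lemma C_rel:
  assumes "v < y"
  shows "f u y * (1 - q ^ (u - 1 - part lam y) * t ^ (y - v)) = (1 - t) * T y"
proof -
  have c: "part lam y \<le> u - 1" using P_le assms by simp
  have "f u y * (1 - q ^ (u - part lam y - 1) * t ^ (y - conj lam u - 1)) =
    t ^ (y - conj lam u - 1) * (1 - q) * (\<Sum>x'\<in>{Suc (part lam y)..<u}. q ^ (x' - Suc (part lam y)) * f x' y)
  + (1 - t) * (\<Sum>y'\<in>{Suc (conj lam u)..<y}. t ^ (y - Suc y') * f u y')"
    by (rule hw_unfold2) (use assms Cu c u1 v1 q0 q1 t0 t1 in auto)
  moreover have "(\<Sum>x'\<in>{Suc (part lam y)..<u}. q ^ (x' - Suc (part lam y)) * f x' y) = 0"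
    by (rule sum.neutral) (auto simp: hw_zero)
  moreover have "Suc (conj lam u) = v" "u - part lam y - 1 = u - 1 - part lam y" "y - conj lam u - 1 = y - v"
    using Cu v1 by auto
  ultimately show ?thesis unfolding T_def by simp
qed

lemma factor:
  "u \<le> x \<Longrightarrow> v \<le> y \<Longrightarrow> f x y = f x v * f u y"
proof (induction "x + y" arbitrary: x y rule: less_induct)
  case less
  show ?case
  proof (cases "x = u \<or> y = v")
    case True
    then show ?thesis using f_uv by auto
  next
    case False
    then have xu: "u < x" and yv: "v < y" using less.prems by auto
    define a where "a = x - u"
    define mm where "mm = u - 1 - part lam y"
    define b where "b = y - v"
    define l where "l = v - 1 - conj lam x"
    have Py: "part lam y \<le> u - 1" using P_le yv by simp
    have Cx: "conj lam x \<le> v - 1" using C_le xu by simp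
    have A: "x - part lam y - 1 = a + mm" using Py xu u1 unfolding a_def mm_def by auto
    have L: "y - conj lam x - 1 = b + l" using Cx yv v1 unfolding b_def l_def by auto
    have main: "f x y * (1 - q ^ (x - part lam y - 1) * t ^ (y - conj lam x - 1)) =
      t ^ (y - conj lam x - 1) * (1 - q) * (\<Sum>x'\<in>{Suc (part lam y)..<x}. q ^ (x' - Suc (part lam y)) * f x' y)
    + (1 - t) * (\<Sum>y'\<in>{Suc (conj lam x)..<y}. t ^ (y - Suc y') * f x y')"
      by (rule hw_unfold2) (use xu yv Py Cx u1 v1 q0 q1 t0 t1 in auto)
    have sA: "(\<Sum>x'\<in>{Suc (part lam y)..<x}. q ^ (x' - Suc (part lam y)) * f x' y) = q ^ mm * f u y * S x"
    proof -
      have "(\<Sum>x'\<in>{Suc (part lam y)..<x}. q ^ (x' - Suc (part lam y)) * f x' y) =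
          (\<Sum>x'\<in>{Suc (part lam y)..<u}. q ^ (x' - Suc (part lam y)) * f x' y) +
          (\<Sum>x'\<in>{u..<x}. q ^ (x' - Suc (part lam y)) * f x' y)"
        using Py xu u1 by (intro sum.atLeastLessThan_concat[symmetric]) auto
      also have "(\<Sum>x'\<in>{Suc (part lam y)..<u}. q ^ (x' - Suc (part lam y)) * f x' y) = 0"
        by (rule sum.neutral) (auto simp: hw_zero)
      also have "(\<Sum>x'\<in>{u..<x}. q ^ (x' - Suc (part lam y)) * f x' y) =
          (\<Sum>x'\<in>{u..<x}. q ^ mm * f u y * (q ^ (x' - u) * f x' v))"
      proof (rule sum.cong)
        fix x' assume x': "x' \<in> {u..<x}"
        then have "f x' y = f x' v * f u y" using less.hyps[of x' y] less.prems by auto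
        moreover have "x' - Suc (part lam y) = mm + (x' - u)" using x' Py u1 unfolding mm_def by auto
        ultimately show "q ^ (x' - Suc (part lam y)) * f x' y = q ^ mm * f u y * (q ^ (x' - u) * f x' v)"
          by (simp add: power_add)
      qed simp
      finally show ?thesis unfolding S_def by (simp add: sum_distrib_left)
    qed
    have sL: "(\<Sum>y'\<in>{Suc (conj lam x)..<y}. t ^ (y - Suc y') * f x y') = f x v * T y"
    proof -
      have "(\<Sum>y'\<in>{Suc (conj lam x)..<y}. t ^ (y - Suc y') * f x y') =
          (\<Sum>y'\<in>{Suc (conj lam x)..<v}. t ^ (y - Suc y') * f x y') +
          (\<Sum>y'\<in>{v..<y}. t ^ (y - Suc y') * f x y')"
        using Cx yv v1 by (intro sum.atLeastLessThan_concat[symmetric]) auto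
      also have "(\<Sum>y'\<in>{Suc (conj lam x)..<v}. t ^ (y - Suc y') * f x y') = 0"
        by (rule sum.neutral) (auto simp: hw_zero)
      also have "(\<Sum>y'\<in>{v..<y}. t ^ (y - Suc y') * f x y') =
          (\<Sum>y'\<in>{v..<y}. f x v * (t ^ (y - Suc y') * f u y'))"
      proof (rule sum.cong)
        fix y' assume y': "y' \<in> {v..<y}"
        then have "f x y' = f x v * f u y'" using less.hyps[of x y'] less.prems by auto
        then show "t ^ (y - Suc y') * f x y' = f x v * (t ^ (y - Suc y') * f u y')" by simp
      qed simp
      finally show ?thesis unfolding T_def by (simp add: sum_distrib_left)
    qed
    have Rr: "f x v * (1 - q ^ a * t ^ l) = t ^ l * (1 - q) * S x" using R_rel[OF xu] unfolding a_def l_def .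
    have Cr: "f u y * (1 - q ^ mm * t ^ b) = (1 - t) * T y" using C_rel[OF yv] unfolding mm_def b_def .
    have D: "1 - q ^ (a + mm) * t ^ (b + l) \<noteq> 0" using lt1[of "a + mm" "b + l"] xu unfolding a_def by auto
    have "f x y * (1 - q ^ (a + mm) * t ^ (b + l)) =
       t ^ b * q ^ mm * f u y * (t ^ l * (1 - q) * S x) + f x v * ((1 - t) * T y)"
      using main sA sL unfolding A L by (simp add: power_add algebra_simps)
    also have "\<dots> = t ^ b * q ^ mm * f u y * (f x v * (1 - q ^ a * t ^ l)) + f x v * (f u y * (1 - q ^ mm * t ^ b))"
      using Rr Cr by simp
    also have "\<dots> = f x v * f u y * (1 - q ^ (a + mm) * t ^ (b + l))"
      by (simp add: power_add algebra_simps)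
    finally show ?thesis using D by simp
  qed
qed

end




lemma prod_tele:
  fixes g :: "nat \<Rightarrow> real"
  assumes "m \<le> n" "\<And>k. m \<le> k \<Longrightarrow> k \<le> n \<Longrightarrow> g k \<noteq> 0"
  shows "(\<Prod>k\<in>{m..<n}. g (Suc k) / g k) = g n / g m"
  using assms
proof (induction n)
  case 0
  then show ?case by simp
next
  case (Suc n)
  show ?case
  proof (cases "m = Suc n")
    case True
    then show ?thesis using Suc.prems by simp
  next
    case False
    then have mn: "m \<le> n" using Suc.prems by simp
    have "(\<Prod>k\<in>{m..<Suc n}. g (Suc k) / g k) = (\<Prod>k\<in>{m..<n}. g (Suc k) / g k) * (g (Suc n) / g n)"
      using mn by (simp add: prod.atLeastLessThan_Suc)
    also have "\<dots> = g n / g m * (g (Suc n) / g n)" using Suc.IH[OF mn] Suc.prems by simp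
    also have "\<dots> = g (Suc n) / g m" using Suc.prems(2)[of n] mn by simp
    finally show ?thesis .
  qed
qed

definition Fq :: "real \<Rightarrow> real \<Rightarrow> nat \<Rightarrow> nat \<Rightarrow> real" where
  "Fq q t a l = (1 - q ^ Suc a * t ^ l) / (1 - q ^ a * t ^ l)"
definition Gq :: "real \<Rightarrow> real \<Rightarrow> nat \<Rightarrow> nat \<Rightarrow> real" where
  "Gq q t a l = (1 - q ^ Suc a * t ^ l) / (1 - q ^ Suc a * t ^ Suc l)"
definition Eqt :: "real \<Rightarrow> real \<Rightarrow> nat \<Rightarrow> nat \<Rightarrow> real" where
  "Eqt q t m b = (1 - q ^ m * t ^ Suc b) / (1 - q ^ m * t ^ b)"
definition Hq :: "real \<Rightarrow> real \<Rightarrow> nat \<Rightarrow> nat \<Rightarrow> nat \<Rightarrow> real" where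
  "Hq q t m m' h = (1 - q ^ m * t ^ Suc h) / (1 - q ^ m' * t ^ Suc h)"

lemma alg_S: "1 - Q * W \<noteq> (0::real) \<Longrightarrow> s + Q * (W * (1 - q) * s / (1 - Q * W)) = s * ((1 - q * Q * W) / (1 - Q * W))"
  by (simp add: field_simps algebra_simps)

lemma alg_T: "1 - Q * W \<noteq> (0::real) \<Longrightarrow> t * s + (1 - t) * s / (1 - Q * W) = s * ((1 - Q * (t * W)) / (1 - Q * W))"
  by (simp add: field_simps algebra_simps)

context hws
begin

lemma nz: "0 < i \<or> 0 < j \<Longrightarrow> 1 - q ^ i * t ^ j \<noteq> 0"
proof -
  assume "0 < i \<or> 0 < j"
  then have "q ^ i * t ^ j < 1" by (rule lt1)
  then show ?thesis by simp
qed

lemma Fq_nz: "0 < a \<Longrightarrow> Fq q t a l \<noteq> 0"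
  unfolding Fq_def using nz[of "Suc a" l] nz[of a l] by simp
lemma Gq_nz: "Gq q t a l \<noteq> 0"
  unfolding Gq_def using nz[of "Suc a" l] nz[of "Suc a" "Suc l"] by simp
lemma Eqt_nz: "0 < b \<Longrightarrow> Eqt q t m b \<noteq> 0"
  unfolding Eqt_def using nz[of m "Suc b"] nz[of m b] by simp
lemma Hq_nz: "Hq q t m m' h \<noteq> 0"
  unfolding Hq_def using nz[of m "Suc h"] nz[of m' "Suc h"] by simp

lemma rho_G: "0 < a \<Longrightarrow> Fq q t a l / Fq q t a (Suc l) = Gq q t a l / Gq q t (a - 1) l"
proof -
  assume a: "0 < a"
  then obtain b where b: "a = Suc b" by (cases a) auto
  have n1: "1 - q ^ Suc (Suc b) * t ^ l \<noteq> 0" "1 - q ^ Suc b * t ^ l \<noteq> 0"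
     "1 - q ^ Suc (Suc b) * t ^ Suc l \<noteq> 0" "1 - q ^ Suc b * t ^ Suc l \<noteq> 0"
    by (rule nz, simp)+
  show ?thesis unfolding b Fq_def Gq_def using n1 by (simp add: field_simps)
qed

lemma rho_H: "0 < b \<Longrightarrow> Eqt q t m b / Eqt q t m' b = Hq q t m m' b / Hq q t m m' (b - 1)"
proof -
  assume "0 < b"
  then obtain c where c: "b = Suc c" by (cases b) auto
  have n1: "1 - q ^ m * t ^ Suc (Suc c) \<noteq> 0" "1 - q ^ m * t ^ Suc c \<noteq> 0"
     "1 - q ^ m' * t ^ Suc (Suc c) \<noteq> 0" "1 - q ^ m' * t ^ Suc c \<noteq> 0"
    by (rule nz, simp)+
  show ?thesis unfolding c Eqt_def Hq_def using n1 by (simp add: field_simps)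
qed

lemma S_closed:
  assumes "Suc u \<le> x"
  shows "S x = (\<Prod>x'\<in>{Suc u..<x}. Fq q t (x' - u) (v - 1 - conj lam x'))"
  using assms
proof (induction x rule: dec_induct)
  case base
  then show ?case by (simp add: S_def f_uv)
next
  case (step n)
  define l where "l = v - 1 - conj lam n"
  have un: "u < n" using step by simp
  have D: "1 - q ^ (n - u) * t ^ l \<noteq> 0" using nz[of "n - u" l] un by simp
  have R: "f n v * (1 - q ^ (n - u) * t ^ l) = t ^ l * (1 - q) * S n" using R_rel[OF un] l_def by simp
  have "S (Suc n) = S n + q ^ (n - u) * f n v"
    unfolding S_def using un by (simp add: sum.atLeastLessThan_Suc)
  also have "\<dots> = S n * Fq q t (n - u) l"
  proof -
    have fn: "f n v = t ^ l * (1 - q) * S n / (1 - q ^ (n - u) * t ^ l)" using R D by (simp add: field_simps)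
    show ?thesis unfolding fn Fq_def power_Suc
      by (rule alg_S[OF D])
  qed
  finally show ?case using step.IH un l_def by (simp add: prod.atLeastLessThan_Suc)
qed

lemma T_closed:
  assumes "Suc v \<le> y"
  shows "T y = (\<Prod>y'\<in>{Suc v..<y}. Eqt q t (u - 1 - part lam y') (y' - v))"
  using assms
proof (induction y rule: dec_induct)
  case base
  then show ?case by (simp add: T_def f_uv)
next
  case (step n)
  define m where "m = u - 1 - part lam n"
  have vn: "v < n" using step by simp
  have D: "1 - q ^ m * t ^ (n - v) \<noteq> 0" using nz[of m "n - v"] vn by simp
  have C: "f u n * (1 - q ^ m * t ^ (n - v)) = (1 - t) * T n" using C_rel[OF vn] m_def by simp
  have "T (Suc n) = t * T n + f u n"
  proof -
    have "T (Suc n) = (\<Sum>y'\<in>{v..<n}. t ^ (Suc n - Suc y') * f u y') + t ^ 0 * f u n"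
      unfolding T_def using vn by (simp add: sum.atLeastLessThan_Suc)
    also have "(\<Sum>y'\<in>{v..<n}. t ^ (Suc n - Suc y') * f u y') = t * T n"
      unfolding T_def sum_distrib_left
    proof (rule sum.cong)
      fix y' assume "y' \<in> {v..<n}"
      then have "Suc n - Suc y' = Suc (n - Suc y')" by auto
      then show "t ^ (Suc n - Suc y') * f u y' = t * (t ^ (n - Suc y') * f u y')" by simp
    qed simp
    finally show ?thesis by simp
  qed
  also have "\<dots> = T n * Eqt q t m (n - v)"
  proof -
    have fn: "f u n = (1 - t) * T n / (1 - q ^ m * t ^ (n - v))" using C D by (simp add: field_simps)
    show ?thesis unfolding fn Eqt_def power_Suc
      by (rule alg_T[OF D])
  qed
  finally show ?case using step.IH vn m_def by (simp add: prod.atLeastLessThan_Suc)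
qed

end




lemma alg_fin: "(A::real) \<noteq> 0 \<Longrightarrow> B \<noteq> 0 \<Longrightarrow> c \<noteq> 0 \<Longrightarrow> w * c * (A / B * (P / (c / B))) / A = w * P"
  by (simp add: field_simps)

context hws
begin

lemma F1: "1 \<le> x \<Longrightarrow> 1 \<le> y \<Longrightarrow> y \<le> conj lam x \<longleftrightarrow> x \<le> part lam y"
  using F1_gen[OF srt] by blast

lemma nzq: "1 - q * t ^ j \<noteq> 0"
  using nz[of 1 j] by simp

lemma swap_R:
  assumes x: "part lam 1 < x"
  shows "(\<Prod>x'\<in>{Suc u..<x}. \<Prod>y\<in>{1..conj lam x'}. g x' y) = (\<Prod>y\<in>{1..v-1}. \<Prod>x'\<in>{Suc u..part lam y}. (g x' y :: real))"
proof -
  have s1: "{1..conj lam x'} = {y. y \<in> {1..v-1} \<and> x' \<le> part lam y}" if "x' \<in> {Suc u..<x}" for x'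
  proof -
    have "conj lam x' \<le> v - 1" using C_le that by simp
    then show ?thesis using F1[of x'] that by auto
  qed
  have s2: "{Suc u..part lam y} = {x'. x' \<in> {Suc u..<x} \<and> x' \<le> part lam y}" if "y \<in> {1..v-1}" for y
  proof -
    have "part lam y \<le> part lam 1" using part_antimono[OF srt, of 1 y] that by simp
    then show ?thesis using x by auto
  qed
  have "(\<Prod>x'\<in>{Suc u..<x}. \<Prod>y\<in>{1..conj lam x'}. g x' y) = (\<Prod>x'\<in>{Suc u..<x}. \<Prod>y\<in>{y. y \<in> {1..v-1} \<and> x' \<le> part lam y}. g x' y)"
  proof (rule prod.cong[OF refl])
    fix x' assume h: "x' \<in> {Suc u..<x}"
    show "(\<Prod>y\<in>{1..conj lam x'}. g x' y) = (\<Prod>y\<in>{y. y \<in> {1..v-1} \<and> x' \<le> part lam y}. g x' y)"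
      unfolding s1[OF h] ..
  qed
  also have "\<dots> = (\<Prod>y\<in>{1..v-1}. \<Prod>x'\<in>{x'. x' \<in> {Suc u..<x} \<and> x' \<le> part lam y}. g x' y)"
    by (rule prod.swap_restrict) auto
  also have "\<dots> = (\<Prod>y\<in>{1..v-1}. \<Prod>x'\<in>{Suc u..part lam y}. g x' y)"
  proof (rule prod.cong[OF refl])
    fix y assume h: "y \<in> {1..v-1}"
    show "(\<Prod>x'\<in>{x'. x' \<in> {Suc u..<x} \<and> x' \<le> part lam y}. g x' y) = (\<Prod>x'\<in>{Suc u..part lam y}. g x' y)"
      unfolding s2[OF h] ..
  qed
  finally show ?thesis .
qed

lemma swap_C:
  assumes y: "conj lam 1 < y"
  shows "(\<Prod>y'\<in>{Suc v..<y}. \<Prod>x\<in>{1..part lam y'}. g x y') = (\<Prod>x\<in>{1..u-1}. \<Prod>y'\<in>{Suc v..conj lam x}. (g x y' :: real))"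
proof -
  have s1: "{1..part lam y'} = {x. x \<in> {1..u-1} \<and> y' \<le> conj lam x}" if "y' \<in> {Suc v..<y}" for y'
  proof -
    have "part lam y' \<le> u - 1" using P_le that by simp
    then show ?thesis using F1[of _ y'] that by auto
  qed
  have s2: "{Suc v..conj lam x} = {y'. y' \<in> {Suc v..<y} \<and> y' \<le> conj lam x}" if "x \<in> {1..u-1}" for x
  proof -
    have "conj lam x \<le> conj lam 1" using conj_antimono[OF srt, of 1 x] that by simp
    then show ?thesis using y by auto
  qed
  have "(\<Prod>y'\<in>{Suc v..<y}. \<Prod>x\<in>{1..part lam y'}. g x y') = (\<Prod>y'\<in>{Suc v..<y}. \<Prod>x\<in>{x. x \<in> {1..u-1} \<and> y' \<le> conj lam x}. g x y')"
  proof (rule prod.cong[OF refl])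
    fix y' assume h: "y' \<in> {Suc v..<y}"
    show "(\<Prod>x\<in>{1..part lam y'}. g x y') = (\<Prod>x\<in>{x. x \<in> {1..u-1} \<and> y' \<le> conj lam x}. g x y')"
      unfolding s1[OF h] ..
  qed
  also have "\<dots> = (\<Prod>x\<in>{1..u-1}. \<Prod>y'\<in>{y'. y' \<in> {Suc v..<y} \<and> y' \<le> conj lam x}. g x y')"
    by (rule prod.swap_restrict) auto
  also have "\<dots> = (\<Prod>x\<in>{1..u-1}. \<Prod>y'\<in>{Suc v..conj lam x}. g x y')"
  proof (rule prod.cong[OF refl])
    fix x assume h: "x \<in> {1..u-1}"
    show "(\<Prod>y'\<in>{y'. y' \<in> {Suc v..<y} \<and> y' \<le> conj lam x}. g x y') = (\<Prod>y'\<in>{Suc v..conj lam x}. g x y')"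
      unfolding s2[OF h] ..
  qed
  finally show ?thesis .
qed

lemma R_far:
  assumes x: "part lam 1 < x"
  shows "f x v = t ^ (v - 1) * (\<Prod>y\<in>{1..v-1}. br q t (part lam y - u + 1) (v - 1 - y) / br q t (part lam y - u + 1) (v - y))"
proof -
  have "part lam v \<le> part lam 1" using part_antimono[OF srt, of 1 v] v1 by simp
  then have ux: "u \<le> x" using Pv x by simp
  have c0: "conj lam x' = 0" if "part lam 1 < x'" for x'
  proof (rule ccontr)
    assume "conj lam x' \<noteq> 0"
    then have "1 \<le> conj lam x'" by simp
    then have "x' \<le> part lam 1" using F1[of x' 1] that by simp
    then show False using that by simp
  qed
  show ?thesis
  proof (cases "x = u")
    case True
    then have "v = 1" using c0[of u] Cu x v1 by simp
    then show ?thesis using True f_uv by simp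
  next
    case False
    then have xu: "u < x" using ux by simp
    define M where "M = v - 1"
    define rho where "rho a l = Fq q t a l / Fq q t a (Suc l)" for a l
    have lx: "v - 1 - conj lam x = M" using c0[OF x] M_def by simp
    have Rx: "f x v * (1 - q ^ (x - u) * t ^ M) = t ^ M * (1 - q) * S x" using R_rel[OF xu] lx by simp
    have Sx: "S x = (\<Prod>x'\<in>{Suc u..<x}. Fq q t (x' - u) (M - conj lam x'))" using S_closed xu M_def by simp
    have b1: "Fq q t (x' - u) (M - conj lam x') = Fq q t (x' - u) M * (\<Prod>y\<in>{1..conj lam x'}. rho (x' - u) (M - y))"
      if x': "x' \<in> {Suc u..<x}" for x'
    proof -
      define a where "a = x' - u"
      define c where "c = conj lam x'"
      have a0: "0 < a" using x' a_def by auto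
      have cM: "c \<le> M" using C_le[of x'] x' c_def M_def by auto
      have "(\<Prod>y\<in>{1..c}. rho a (M - y)) = (\<Prod>k\<in>{1..<Suc c}. Fq q t a (M + 1 - Suc k) / Fq q t a (M + 1 - k))"
      proof (rule prod.cong)
        show "{1..c} = {1..<Suc c}" by auto
      next
        fix k assume "k \<in> {1..<Suc c}"
        then have "M + 1 - Suc k = M - k" "M + 1 - k = Suc (M - k)" using cM by auto
        then show "rho a (M - k) = Fq q t a (M + 1 - Suc k) / Fq q t a (M + 1 - k)" by (simp add: rho_def)
      qed
      also have "\<dots> = Fq q t a (M + 1 - Suc c) / Fq q t a (M + 1 - 1)"
        using prod_tele[of 1 "Suc c" "\<lambda>k. Fq q t a (M + 1 - k)"] Fq_nz[OF a0] by simp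
      also have "\<dots> = Fq q t a (M - c) / Fq q t a M" by simp
      finally have "(\<Prod>y\<in>{1..c}. rho a (M - y)) = Fq q t a (M - c) / Fq q t a M" .
      then show ?thesis using Fq_nz[OF a0, of M] unfolding a_def c_def by simp
    qed
    have b2: "(\<Prod>x'\<in>{Suc u..<x}. Fq q t (x' - u) M) = (1 - q ^ (x - u) * t ^ M) / (1 - q * t ^ M)"
    proof -
      have "(\<Prod>x'\<in>{Suc u..<x}. Fq q t (x' - u) M) = (\<Prod>k\<in>{Suc u..<x}. (1 - q ^ (Suc k - u) * t ^ M) / (1 - q ^ (k - u) * t ^ M))"
      proof (rule prod.cong[OF refl])
        fix k assume "k \<in> {Suc u..<x}"
        then have "Suc k - u = Suc (k - u)" by auto
        then show "Fq q t (k - u) M = (1 - q ^ (Suc k - u) * t ^ M) / (1 - q ^ (k - u) * t ^ M)" by (simp add: Fq_def)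
      qed
      also have "\<dots> = (1 - q ^ (x - u) * t ^ M) / (1 - q ^ (Suc u - u) * t ^ M)"
        apply (rule prod_tele[where g = "\<lambda>k. 1 - q ^ (k - u) * t ^ M"])
        subgoal using xu by simp
        subgoal for k using nz[of "k - u" M] by simp
        done
      finally show ?thesis by simp
    qed
    have b4: "(\<Prod>x'\<in>{Suc u..part lam y}. rho (x' - u) (M - y)) = Gq q t (part lam y - u) (M - y) / Gq q t 0 (M - y)"
      if y: "y \<in> {1..M}" for y
    proof -
      define p where "p = part lam y"
      define l where "l = M - y"
      have up: "u \<le> p" using F1[of u y] y Cu M_def u1 p_def by auto
      have "(\<Prod>x'\<in>{Suc u..p}. rho (x' - u) l) = (\<Prod>x'\<in>{Suc u..<Suc p}. rho (x' - u) l)"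
        by (rule prod.cong) auto
      also have "\<dots> = (\<Prod>k\<in>{u..<p}. rho (Suc k - u) l)"
        by (rule prod.shift_bounds_Suc_ivl)
      also have "\<dots> = (\<Prod>k\<in>{u..<p}. Gq q t (Suc k - u) l / Gq q t (k - u) l)"
      proof (rule prod.cong[OF refl])
        fix k assume "k \<in> {u..<p}"
        then have "0 < Suc k - u" "Suc k - u - 1 = k - u" by auto
        then show "rho (Suc k - u) l = Gq q t (Suc k - u) l / Gq q t (k - u) l"
          unfolding rho_def using rho_G[of "Suc k - u" l] by simp
      qed
      also have "\<dots> = Gq q t (p - u) l / Gq q t (u - u) l"
        by (rule prod_tele[where g = "\<lambda>k. Gq q t (k - u) l"]) (use up Gq_nz in auto)
      finally show ?thesis unfolding p_def l_def by simp
    qed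
    have b5: "(\<Prod>y\<in>{1..M}. Gq q t 0 (M - y)) = (1 - q) / (1 - q * t ^ M)"
    proof -
      have "(\<Prod>y\<in>{1..M}. Gq q t 0 (M - y)) = (\<Prod>k\<in>{1..<Suc M}. (1 - q * t ^ (M + 1 - Suc k)) / (1 - q * t ^ (M + 1 - k)))"
      proof (rule prod.cong)
        show "{1..M} = {1..<Suc M}" by auto
      next
        fix k assume "k \<in> {1..<Suc M}"
        then have "M + 1 - Suc k = M - k" "M + 1 - k = Suc (M - k)" by auto
        then show "Gq q t 0 (M - k) = (1 - q * t ^ (M + 1 - Suc k)) / (1 - q * t ^ (M + 1 - k))"
          by (simp add: Gq_def)
      qed
      also have "\<dots> = (1 - q * t ^ (M + 1 - Suc M)) / (1 - q * t ^ (M + 1 - 1))"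
        apply (rule prod_tele[where g = "\<lambda>k. 1 - q * t ^ (M + 1 - k)"])
        subgoal by simp
        subgoal for k using nzq[of "M + 1 - k"] by simp
        done
      finally show ?thesis by simp
    qed
    have b6: "br q t (part lam y - u + 1) (v - 1 - y) / br q t (part lam y - u + 1) (v - y) = Gq q t (part lam y - u) (M - y)"
      if y: "y \<in> {1..M}" for y
    proof -
      have "v - y = Suc (M - y)" "v - 1 - y = M - y" using y M_def by auto
      then show ?thesis by (simp add: br_def Gq_def)
    qed
    have "S x = (\<Prod>x'\<in>{Suc u..<x}. Fq q t (x' - u) M) * (\<Prod>x'\<in>{Suc u..<x}. \<Prod>y\<in>{1..conj lam x'}. rho (x' - u) (M - y))"
      unfolding Sx prod.distrib[symmetric] by (rule prod.cong[OF refl]) (rule b1)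
    also have "(\<Prod>x'\<in>{Suc u..<x}. \<Prod>y\<in>{1..conj lam x'}. rho (x' - u) (M - y)) =
        (\<Prod>y\<in>{1..M}. \<Prod>x'\<in>{Suc u..part lam y}. rho (x' - u) (M - y))"
      using swap_R[OF x] M_def by simp
    also have "\<dots> = (\<Prod>y\<in>{1..M}. Gq q t (part lam y - u) (M - y) / Gq q t 0 (M - y))"
      by (rule prod.cong[OF refl]) (rule b4)
    also have "\<dots> = (\<Prod>y\<in>{1..M}. Gq q t (part lam y - u) (M - y)) / (\<Prod>y\<in>{1..M}. Gq q t 0 (M - y))"
      by (rule prod_dividef)
    also have "(\<Prod>y\<in>{1..M}. Gq q t (part lam y - u) (M - y)) =
        (\<Prod>y\<in>{1..M}. br q t (part lam y - u + 1) (v - 1 - y) / br q t (part lam y - u + 1) (v - y))"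
      by (rule prod.cong[OF refl]) (erule b6[symmetric])
    finally have Sx2: "S x = (1 - q ^ (x - u) * t ^ M) / (1 - q * t ^ M) *
        ((\<Prod>y\<in>{1..M}. br q t (part lam y - u + 1) (v - 1 - y) / br q t (part lam y - u + 1) (v - y)) /
         ((1 - q) / (1 - q * t ^ M)))"
      unfolding b2 b5 .
    have n1: "1 - q ^ (x - u) * t ^ M \<noteq> 0" using nz[of "x - u" M] xu by simp
    have n2: "1 - q * t ^ M \<noteq> 0" by (rule nzq)
    have n3: "1 - q \<noteq> 0" using q1 by simp
    have "f x v = t ^ M * (1 - q) * S x / (1 - q ^ (x - u) * t ^ M)" using Rx n1 by (simp add: field_simps)
    also have "\<dots> = t ^ M * (\<Prod>y\<in>{1..M}. br q t (part lam y - u + 1) (v - 1 - y) / br q t (part lam y - u + 1) (v - y))"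
      unfolding Sx2 by (rule alg_fin[OF n1 n2 n3])
    finally show ?thesis unfolding M_def .
  qed
qed

end




lemma alg_fin2: "(A::real) \<noteq> 0 \<Longrightarrow> B \<noteq> 0 \<Longrightarrow> c \<noteq> 0 \<Longrightarrow> c * (A / B * (P / (c / B))) / A = P"
  by (simp add: field_simps)

context hws
begin

lemma C_far:
  assumes y: "conj lam 1 < y"
  shows "f u y = (\<Prod>x\<in>{1..u-1}. br q t (u - 1 - x) (conj lam x - v + 1) / br q t (u - x) (conj lam x - v + 1))"
proof -
  have "conj lam u \<le> conj lam 1" using conj_antimono[OF srt, of 1 u] u1 by simp
  then have vy: "v \<le> y" using Cu y by simp
  have p0: "part lam y' = 0" if "conj lam 1 < y'" for y'
  proof (rule ccontr)
    assume "part lam y' \<noteq> 0"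
    then have "1 \<le> part lam y'" by simp
    then have "y' \<le> conj lam 1" using F1[of 1 y'] that by simp
    then show False using that by simp
  qed
  show ?thesis
  proof (cases "y = v")
    case True
    then have "u = 1" using p0[of v] Pv y u1 by simp
    then show ?thesis using True f_uv by simp
  next
    case False
    then have vy': "v < y" using vy by simp
    define N where "N = u - 1"
    define rho where "rho x b = Eqt q t (N - x) b / Eqt q t (N + 1 - x) b" for x b
    have my: "u - 1 - part lam y = N" using p0[OF y] N_def by simp
    have Cy: "f u y * (1 - q ^ N * t ^ (y - v)) = (1 - t) * T y" using C_rel[OF vy'] my by simp
    have Ty: "T y = (\<Prod>y'\<in>{Suc v..<y}. Eqt q t (N - part lam y') (y' - v))" using T_closed vy' N_def by simp
    have c1: "Eqt q t (N - part lam y') (y' - v) = Eqt q t N (y' - v) * (\<Prod>x\<in>{1..part lam y'}. rho x (y' - v))"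
      if y': "y' \<in> {Suc v..<y}" for y'
    proof -
      define b where "b = y' - v"
      define p where "p = part lam y'"
      have b0: "0 < b" using y' b_def by auto
      have pN: "p \<le> N" using P_le[of y'] y' p_def N_def by auto
      have "(\<Prod>x\<in>{1..p}. rho x b) = (\<Prod>k\<in>{1..<Suc p}. Eqt q t (N + 1 - Suc k) b / Eqt q t (N + 1 - k) b)"
      proof (rule prod.cong)
        show "{1..p} = {1..<Suc p}" by auto
      qed (simp add: rho_def)
      also have "\<dots> = Eqt q t (N + 1 - Suc p) b / Eqt q t (N + 1 - 1) b"
        using prod_tele[of 1 "Suc p" "\<lambda>k. Eqt q t (N + 1 - k) b"] Eqt_nz[OF b0] by simp
      also have "\<dots> = Eqt q t (N - p) b / Eqt q t N b" by simp
      finally have "(\<Prod>x\<in>{1..p}. rho x b) = Eqt q t (N - p) b / Eqt q t N b" .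
      then show ?thesis using Eqt_nz[OF b0, of N] unfolding b_def p_def by simp
    qed
    have c2: "(\<Prod>y'\<in>{Suc v..<y}. Eqt q t N (y' - v)) = (1 - q ^ N * t ^ (y - v)) / (1 - q ^ N * t)"
    proof -
      have "(\<Prod>y'\<in>{Suc v..<y}. Eqt q t N (y' - v)) = (\<Prod>k\<in>{Suc v..<y}. (1 - q ^ N * t ^ (Suc k - v)) / (1 - q ^ N * t ^ (k - v)))"
      proof (rule prod.cong[OF refl])
        fix k assume "k \<in> {Suc v..<y}"
        then have "Suc k - v = Suc (k - v)" by auto
        then show "Eqt q t N (k - v) = (1 - q ^ N * t ^ (Suc k - v)) / (1 - q ^ N * t ^ (k - v))" by (simp add: Eqt_def)
      qed
      also have "\<dots> = (1 - q ^ N * t ^ (y - v)) / (1 - q ^ N * t ^ (Suc v - v))"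
        apply (rule prod_tele[where g = "\<lambda>k. 1 - q ^ N * t ^ (k - v)"])
        subgoal using vy' by simp
        subgoal for k using nz[of N "k - v"] by simp
        done
      finally show ?thesis by simp
    qed
    have c4: "(\<Prod>y'\<in>{Suc v..conj lam x}. rho x (y' - v)) = Hq q t (N - x) (N + 1 - x) (conj lam x - v) / Hq q t (N - x) (N + 1 - x) 0"
      if x: "x \<in> {1..N}" for x
    proof -
      define c where "c = conj lam x"
      define m where "m = N - x"
      define m' where "m' = N + 1 - x"
      have vc: "v \<le> c" using F1[of x v] x Pv v1 N_def c_def by auto
      have "(\<Prod>y'\<in>{Suc v..c}. rho x (y' - v)) = (\<Prod>y'\<in>{Suc v..<Suc c}. rho x (y' - v))"
        by (rule prod.cong) auto
      also have "\<dots> = (\<Prod>k\<in>{v..<c}. rho x (Suc k - v))"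
        by (rule prod.shift_bounds_Suc_ivl)
      also have "\<dots> = (\<Prod>k\<in>{v..<c}. Hq q t m m' (Suc k - v) / Hq q t m m' (k - v))"
      proof (rule prod.cong[OF refl])
        fix k assume "k \<in> {v..<c}"
        then have "0 < Suc k - v" "Suc k - v - 1 = k - v" by auto
        then show "rho x (Suc k - v) = Hq q t m m' (Suc k - v) / Hq q t m m' (k - v)"
          unfolding rho_def m_def m'_def using rho_H[of "Suc k - v" "N - x" "N + 1 - x"] by simp
      qed
      also have "\<dots> = Hq q t m m' (c - v) / Hq q t m m' (v - v)"
        by (rule prod_tele[where g = "\<lambda>k. Hq q t m m' (k - v)"]) (use vc Hq_nz in auto)
      finally show ?thesis unfolding c_def m_def m'_def by simp
    qed
    have c5: "(\<Prod>x\<in>{1..N}. Hq q t (N - x) (N + 1 - x) 0) = (1 - t) / (1 - q ^ N * t)"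
    proof -
      have "(\<Prod>x\<in>{1..N}. Hq q t (N - x) (N + 1 - x) 0) = (\<Prod>k\<in>{1..<Suc N}. (1 - q ^ (N + 1 - Suc k) * t) / (1 - q ^ (N + 1 - k) * t))"
      proof (rule prod.cong)
        show "{1..N} = {1..<Suc N}" by auto
      qed (simp add: Hq_def)
      also have "\<dots> = (1 - q ^ (N + 1 - Suc N) * t) / (1 - q ^ (N + 1 - 1) * t)"
        apply (rule prod_tele[where g = "\<lambda>k. 1 - q ^ (N + 1 - k) * t"])
        subgoal by simp
        subgoal for k using nz[of "N + 1 - k" 1] by simp
        done
      finally show ?thesis by simp
    qed
    have c6: "Hq q t (N - x) (N + 1 - x) (conj lam x - v) = br q t (u - 1 - x) (conj lam x - v + 1) / br q t (u - x) (conj lam x - v + 1)"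
      if x: "x \<in> {1..N}" for x
    proof -
      have "u - 1 - x = N - x" "u - x = N + 1 - x" "conj lam x - v + 1 = Suc (conj lam x - v)"
        using x N_def u1 by auto
      then show ?thesis by (simp add: br_def Hq_def)
    qed
    have "T y = (\<Prod>y'\<in>{Suc v..<y}. Eqt q t N (y' - v)) * (\<Prod>y'\<in>{Suc v..<y}. \<Prod>x\<in>{1..part lam y'}. rho x (y' - v))"
      unfolding Ty prod.distrib[symmetric] by (rule prod.cong[OF refl]) (rule c1)
    also have "(\<Prod>y'\<in>{Suc v..<y}. \<Prod>x\<in>{1..part lam y'}. rho x (y' - v)) =
        (\<Prod>x\<in>{1..N}. \<Prod>y'\<in>{Suc v..conj lam x}. rho x (y' - v))"
      using swap_C[OF y] N_def by simp
    also have "\<dots> = (\<Prod>x\<in>{1..N}. Hq q t (N - x) (N + 1 - x) (conj lam x - v) / Hq q t (N - x) (N + 1 - x) 0)"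
      by (rule prod.cong[OF refl]) (rule c4)
    also have "\<dots> = (\<Prod>x\<in>{1..N}. Hq q t (N - x) (N + 1 - x) (conj lam x - v)) / (\<Prod>x\<in>{1..N}. Hq q t (N - x) (N + 1 - x) 0)"
      by (rule prod_dividef)
    also have "(\<Prod>x\<in>{1..N}. Hq q t (N - x) (N + 1 - x) (conj lam x - v)) =
        (\<Prod>x\<in>{1..N}. br q t (u - 1 - x) (conj lam x - v + 1) / br q t (u - x) (conj lam x - v + 1))"
      by (rule prod.cong[OF refl]) (erule c6)
    finally have Ty2: "T y = (1 - q ^ N * t ^ (y - v)) / (1 - q ^ N * t) *
        ((\<Prod>x\<in>{1..N}. br q t (u - 1 - x) (conj lam x - v + 1) / br q t (u - x) (conj lam x - v + 1)) /
         ((1 - t) / (1 - q ^ N * t)))"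
      unfolding c2 c5 .
    have n1: "1 - q ^ N * t ^ (y - v) \<noteq> 0" using nz[of N "y - v"] vy' by simp
    have n2: "1 - q ^ N * t \<noteq> 0" using nz[of N 1] by simp
    have n3: "1 - t \<noteq> 0" using t1 by simp
    have "f u y = (1 - t) * T y / (1 - q ^ N * t ^ (y - v))" using Cy n1 by (simp add: field_simps)
    also have "\<dots> = (\<Prod>x\<in>{1..N}. br q t (u - 1 - x) (conj lam x - v + 1) / br q t (u - x) (conj lam x - v + 1))"
      unfolding Ty2 by (rule alg_fin2[OF n1 n2 n3])
    finally show ?thesis unfolding N_def .
  qed
qed

end





lemma add_one_cell:
  assumes lp: "is_partition lam" and nu: "nu \<in> add_one lam"
  obtains u v where "cells nu - cells lam = {(u,v)}" "1 \<le> u" "1 \<le> v" "part lam v = u - 1" "conj lam u = v - 1"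
    "\<And>y. 1 \<le> y \<Longrightarrow> part nu y = (if y = v then u else part lam y)"
    "\<And>x. 1 \<le> x \<Longrightarrow> conj nu x = (if x = u then v else conj lam x)"
proof -
  have srt: "sorted_wrt (\<ge>) lam" using lp by (simp add: is_partition_def)
  have nup: "is_partition nu" and sub: "cells lam \<subseteq> cells nu" and cd: "card (cells nu - cells lam) = 1"
    using nu by (auto simp: add_one_def)
  have srtn: "sorted_wrt (\<ge>) nu" using nup by (simp add: is_partition_def)
  obtain d where D: "cells nu - cells lam = {d}" using cd by (rule card_1_singletonE)
  obtain u v where d: "d = (u, v)" by (cases d)
  have uvn: "(u,v) \<in> cells nu" and uvl: "(u,v) \<notin> cells lam" using D d by auto
  then have u1: "1 \<le> u" and v1: "1 \<le> v" and unu: "u \<le> part nu v" and ul: "part lam v < u"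
    by (auto simp: cells_def)
  have ge: "part lam y \<le> part nu y" if "1 \<le> y" for y
  proof (cases "part lam y = 0")
    case False
    then have "(part lam y, y) \<in> cells lam" using that by (auto simp: cells_def)
    then have "(part lam y, y) \<in> cells nu" using sub by auto
    then show ?thesis by (auto simp: cells_def)
  qed simp
  have le_other: "part nu y \<le> part lam y" if "1 \<le> y" "y \<noteq> v" for y
  proof (rule ccontr)
    assume "\<not> part nu y \<le> part lam y"
    then have "(Suc (part lam y), y) \<in> cells nu - cells lam" using that by (auto simp: cells_def)
    then show False using D d that by auto
  qed
  have le_v: "part nu v \<le> Suc (part lam v)"
  proof (rule ccontr)
    assume "\<not> part nu v \<le> Suc (part lam v)"
    then have "(Suc (part lam v), v) \<in> cells nu - cells lam" "(Suc (Suc (part lam v)), v) \<in> cells nu - cells lam"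
      using v1 by (auto simp: cells_def)
    then show False using D by auto
  qed
  have uv: "u = Suc (part lam v)" "part nu v = u" using unu ul le_v by auto
  have pnu: "part nu y = (if y = v then u else part lam y)" if "1 \<le> y" for y
    using uv ge[OF that] le_other[OF that] by auto
  have key: "u \<le> part lam y \<longleftrightarrow> y < v" if "1 \<le> y" for y
  proof (cases "y < v")
    case True
    have "part nu v \<le> part nu y" using part_antimono[OF srtn that] True by simp
    then show ?thesis using True pnu[OF that] uv by simp
  next
    case False
    have "part lam y \<le> part lam v" using part_antimono[OF srt v1] False by simp
    then show ?thesis using False uv by simp
  qed
  have clu: "conj lam u = v - 1"
  proof (rule nat_eq_by_le)
    fix y :: nat assume y: "1 \<le> y"
    show "y \<le> conj lam u \<longleftrightarrow> y \<le> v - 1" using F1_gen[OF srt u1 y] key[OF y] by auto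
  qed
  have cnu: "conj nu x = (if x = u then v else conj lam x)" if x: "1 \<le> x" for x
  proof (cases "x = u")
    case True
    have "conj nu u = v"
    proof (rule nat_eq_by_le)
      fix y :: nat assume y: "1 \<le> y"
      show "y \<le> conj nu u \<longleftrightarrow> y \<le> v" using F1_gen[OF srtn u1 y] key[OF y] pnu[OF y] by auto
    qed
    then show ?thesis using True by simp
  next
    case False
    have "conj nu x = conj lam x"
    proof (rule nat_eq_by_le)
      fix y :: nat assume y: "1 \<le> y"
      have "x \<le> part nu y \<longleftrightarrow> x \<le> part lam y" using pnu[OF y] uv False by auto
      then show "y \<le> conj nu x \<longleftrightarrow> y \<le> conj lam x" using F1_gen[OF srtn x y] F1_gen[OF srt x y] by simp
    qed
    then show ?thesis using False by simp
  qed
  show ?thesis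
    by (rule that[of u v]) (use D d u1 v1 uv clu pnu cnu in auto)
qed




lemma cells_finite:
  assumes srt: "sorted_wrt (\<ge>) lam"
  shows "finite (cells lam)"
proof -
  have "cells lam \<subseteq> {1..part lam 1} \<times> {1..conj lam 1}"
  proof
    fix c assume c: "c \<in> cells lam"
    obtain x y where xy: "c = (x, y)" by (cases c)
    have h: "1 \<le> x" "1 \<le> y" "x \<le> part lam y" using c xy by (auto simp: cells_def)
    have "part lam y \<le> part lam 1" using part_antimono[OF srt, of 1 y] h by simp
    moreover have "y \<le> conj lam x" using F1_gen[OF srt h(1) h(2)] h by simp
    moreover have "conj lam x \<le> conj lam 1" using conj_antimono[OF srt, of 1 x] h by simp
    ultimately show "c \<in> {1..part lam 1} \<times> {1..conj lam 1}" using h xy by auto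
  qed
  then show ?thesis by (rule finite_subset) simp
qed

theorem theorem6p5:
  fixes lam nu :: "nat list" and x y :: nat and q t :: real
  assumes "is_partition lam"
    and "x > part lam 1" and "y > conj lam 1"
    and "nu \<in> add_one lam"
    and "0 < q" and "q < 1" and "0 < t" and "t < 1"
  shows "hook_prob lam q t nu (x, y) = t ^ (n_part nu - n_part lam) * alpha nu lam q t"
proof -
  have srt: "sorted_wrt (\<ge>) lam" using assms(1) by (simp add: is_partition_def)
  obtain u v where D: "cells nu - cells lam = {(u,v)}" and u1: "1 \<le> u" and v1: "1 \<le> v"
    and Pv: "part lam v = u - 1" and Cu: "conj lam u = v - 1"
    and pnu: "\<And>y. 1 \<le> y \<Longrightarrow> part nu y = (if y = v then u else part lam y)"
    and cnu: "\<And>x. 1 \<le> x \<Longrightarrow> conj nu x = (if x = u then v else conj lam x)"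
    using add_one_cell[OF assms(1) assms(4)] by blast
  interpret hws lam u v q t
    by unfold_locales (use srt u1 v1 Pv Cu assms(5-8) in auto)
  have sub: "cells lam \<subseteq> cells nu" using assms(4) by (simp add: add_one_def)
  define Rp where "Rp = (\<Prod>y\<in>{1..v-1}. br q t (part lam y - u + 1) (v - 1 - y) / br q t (part lam y - u + 1) (v - y))"
  define Cp where "Cp = (\<Prod>x\<in>{1..u-1}. br q t (u - 1 - x) (conj lam x - v + 1) / br q t (u - x) (conj lam x - v + 1))"
  have "part lam v \<le> part lam 1" using part_antimono[OF srt, of 1 v] v1 by simp
  then have ux: "u \<le> x" using Pv assms(2) by simp
  have "conj lam u \<le> conj lam 1" using conj_antimono[OF srt, of 1 u] u1 by simp
  then have vy: "v \<le> y" using Cu assms(3) by simp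
  have walk: "hook_prob lam q t nu (x, y) = t ^ (v - 1) * Rp * Cp"
  proof -
    have "hook_prob lam q t nu (x, y) = f x y" unfolding hook_prob_def D by simp
    also have "\<dots> = f x v * f u y" by (rule factor[OF ux vy])
    also have "\<dots> = t ^ (v - 1) * Rp * Cp" using R_far[OF assms(2)] C_far[OF assms(3)] Rp_def Cp_def by simp
    finally show ?thesis .
  qed
  have row: "rowset nu lam = (\<lambda>x. (x, v)) ` {1..u-1}"
    unfolding rowset_def D using Pv v1 by (auto simp: cells_def)
  have col: "colset nu lam = (\<lambda>y. (u, y)) ` {1..v-1}"
  proof -
    have mem: "(u, y') \<in> cells lam \<longleftrightarrow> y' \<in> {1..v-1}" for y'
    proof -
      have "(u, y') \<in> cells lam \<longleftrightarrow> 1 \<le> y' \<and> u \<le> part lam y'" using u1 by (simp add: cells_def)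
      also have "\<dots> \<longleftrightarrow> 1 \<le> y' \<and> y' \<le> conj lam u" using F1_gen[OF srt u1, of y'] by auto
      finally show ?thesis using Cu by simp
    qed
    show ?thesis
    proof (rule set_eqI)
      fix c :: "nat \<times> nat"
      obtain a b where c: "c = (a, b)" by (cases c)
      have "c \<in> colset nu lam \<longleftrightarrow> a = u \<and> (u, b) \<in> cells lam" unfolding colset_def D c by auto
      also have "\<dots> \<longleftrightarrow> a = u \<and> b \<in> {1..v-1}" using mem by simp
      also have "\<dots> \<longleftrightarrow> c \<in> (\<lambda>y. (u, y)) ` {1..v-1}" unfolding c by auto
      finally show "c \<in> colset nu lam \<longleftrightarrow> c \<in> (\<lambda>y. (u, y)) ` {1..v-1}" .
    qed
  qed
  have alpha_eq: "alpha nu lam q t = Cp * Rp"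
  proof -
    have A: "(\<Prod>c\<in>rowset nu lam. br q t (arm lam c) (leg lam c + 1) / br q t (arm nu c) (leg nu c + 1)) = Cp"
      unfolding row Cp_def
    proof (subst prod.reindex)
      show "inj_on (\<lambda>x. (x, v)) {1..u-1}" by (auto simp: inj_on_def)
    next
      show "prod ((\<lambda>c. br q t (arm lam c) (leg lam c + 1) / br q t (arm nu c) (leg nu c + 1)) \<circ> (\<lambda>x. (x, v))) {1..u-1} =
        (\<Prod>x\<in>{1..u-1}. br q t (u - 1 - x) (conj lam x - v + 1) / br q t (u - x) (conj lam x - v + 1))"
      proof (rule prod.cong[OF refl])
        fix x' assume x': "x' \<in> {1..u-1}"
        have "arm lam (x', v) = u - 1 - x'" using Pv by (simp add: arm_def)
        moreover have "arm nu (x', v) = u - x'" using pnu[OF v1] by (simp add: arm_def)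
        moreover have "leg lam (x', v) = conj lam x' - v" by (simp add: leg_def)
        moreover have "leg nu (x', v) = conj lam x' - v" using cnu[of x'] x' by (auto simp: leg_def)
        ultimately show "((\<lambda>c. br q t (arm lam c) (leg lam c + 1) / br q t (arm nu c) (leg nu c + 1)) \<circ> (\<lambda>x. (x, v))) x' =
          br q t (u - 1 - x') (conj lam x' - v + 1) / br q t (u - x') (conj lam x' - v + 1)" by simp
      qed
    qed
    have B: "(\<Prod>c\<in>colset nu lam. br q t (arm lam c + 1) (leg lam c) / br q t (arm nu c + 1) (leg nu c)) = Rp"
      unfolding col Rp_def
    proof (subst prod.reindex)
      show "inj_on (\<lambda>y. (u, y)) {1..v-1}" by (auto simp: inj_on_def)
    next
      show "prod ((\<lambda>c. br q t (arm lam c + 1) (leg lam c) / br q t (arm nu c + 1) (leg nu c)) \<circ> (\<lambda>y. (u, y))) {1..v-1} =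
        (\<Prod>y\<in>{1..v-1}. br q t (part lam y - u + 1) (v - 1 - y) / br q t (part lam y - u + 1) (v - y))"
      proof (rule prod.cong[OF refl])
        fix y' assume y': "y' \<in> {1..v-1}"
        have "arm lam (u, y') = part lam y' - u" by (simp add: arm_def)
        moreover have "arm nu (u, y') = part lam y' - u" using pnu[of y'] y' by (auto simp: arm_def)
        moreover have "leg lam (u, y') = v - 1 - y'" using Cu by (simp add: leg_def)
        moreover have "leg nu (u, y') = v - y'" using cnu[OF u1] by (simp add: leg_def)
        ultimately show "((\<lambda>c. br q t (arm lam c + 1) (leg lam c) / br q t (arm nu c + 1) (leg nu c)) \<circ> (\<lambda>y. (u, y))) y' =
          br q t (part lam y' - u + 1) (v - 1 - y') / br q t (part lam y' - u + 1) (v - y')" by simp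
      qed
    qed
    show ?thesis unfolding alpha_def A B ..
  qed
  have npart: "n_part nu = n_part lam + (v - 1)"
  proof -
    have fin: "finite (cells lam)" by (rule cells_finite[OF srt])
    have cn: "cells nu = insert (u, v) (cells lam)" using D sub by auto
    have nin: "(u, v) \<notin> cells lam" using D by auto
    have l0: "leg nu (u, v) = 0" using cnu[OF u1] by (simp add: leg_def)
    have lc: "leg nu c = leg lam c + (if fst c = u then 1 else 0)" if c: "c \<in> cells lam" for c
    proof -
      obtain x' y' where xy: "c = (x', y')" by (cases c)
      have h: "1 \<le> x'" "1 \<le> y'" "x' \<le> part lam y'" using c xy by (auto simp: cells_def)
      show ?thesis
      proof (cases "x' = u")
        case True
        have "y' \<le> conj lam u" using F1_gen[OF srt u1 h(2)] h True by simp
        then show ?thesis using True xy cnu[OF u1] Cu v1 by (auto simp: leg_def)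
      next
        case False
        then show ?thesis using xy cnu[OF h(1)] by (simp add: leg_def)
      qed
    qed
    have cnt: "(\<Sum>c\<in>cells lam. (if fst c = u then 1 else 0 :: nat)) = v - 1"
    proof -
      have "(\<Sum>c\<in>cells lam. (if fst c = u then 1 else 0 :: nat)) = card {c \<in> cells lam. fst c = u}"
        using fin by (simp add: sum.If_cases Int_def)
      also have "{c \<in> cells lam. fst c = u} = colset nu lam" unfolding colset_def D by auto
      also have "card \<dots> = v - 1" unfolding col by (subst card_image) (auto simp: inj_on_def)
      finally show ?thesis .
    qed
    have "n_part nu = leg nu (u, v) + (\<Sum>c\<in>cells lam. leg nu c)"
      unfolding n_part_def cn using fin nin by simp
    also have "(\<Sum>c\<in>cells lam. leg nu c) = (\<Sum>c\<in>cells lam. leg lam c + (if fst c = u then 1 else 0))"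
      by (rule sum.cong[OF refl]) (rule lc)
    also have "\<dots> = n_part lam + (v - 1)" unfolding sum.distrib cnt n_part_def ..
    finally show ?thesis using l0 by simp
  qed
  show ?thesis unfolding walk alpha_eq npart by simp
qed


end
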